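(* Let $(M_0,g_0)$ be a smooth three-dimensional Riemannian manifold and $M\subset M_0$ an embedded two-dimensional submanifold with induced metric $g$. Work locally, on an open set of $M_0$ meeting $M$ on which there is an adapted orthonormal frame $\{b^1,b^2,b^3\}$: along $M$ the fields $b^1,b^2$ are tangent to $M$ and $b^3$ is a unit normal. Let $b_z^1,b_z^2$ be the restrictions of $b^1,b^2$ to $M$. Let $v=v^1b_z^1+v^2b_z^2$ be a smooth vector field on $M$. Then there is an extension $u=u^1b^1+u^2b^2+u^3b^3$ of $v$ to a neighborhood of $M$ (that is, $u^3=0$ on $M$ and $u^j|_M=v^j$ for $j=1,2$) such that on $M$ $$\mathsf{curl}(u)=\mathsf{rot}(v)\,b^3\qquad\text{and}\qquad \mathsf{div}(u)=\mathsf{div}(v).$$ Moreover, if $\mathsf{div}(v)=0$, then there is an extension $u$ of $v$ such that $\mathsf{div}(u)=0$ in a neighborhood of $M$.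
   Context: Let $\theta^j=\flat b^j$ and $\theta_z^j=\flat b_z^j$ be the dual coframes. Orient $M_0$ by $\theta^1\wedge\theta^2\wedge\theta^3$ and $M$ by $\theta_z^1\wedge\theta_z^2$, with $\ast$ the corresponding Hodge stars. Define $$\mathsf{curl}(u)=\sharp\ast d(\flat u),\qquad \mathsf{rot}(v)=\ast d(\flat v).$$ Divergences are taken with respect to $g_0$ on $M_0$ and $g$ on $M$. All statements are local. *)

theory Defs
  imports "HOL-Analysis.Analysis"
begin

text \<open>M0 is an open set U of R^3 (coordinates x1,x2,x3) carrying an
arbitrary smooth Riemannian metric g0 (matrix of components); the surface M is the coordinate
slice {x3 = 0} of U, parametrised by y in R^2 via emb. Vector fields are given by their
coordinate component vectors; covector fields likewise.\<close>

coinductive smooth_on :: "(real^'n \<Rightarrow> real) \<Rightarrow> (real^'n) set \<Rightarrow> bool" where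
  "(\<forall>x\<in>S. f differentiable (at x)) \<Longrightarrow>
   (\<forall>w. smooth_on (\<lambda>x. frechet_derivative f (at x) w) S) \<Longrightarrow> smooth_on f S"

definition pd :: "'n::finite \<Rightarrow> (real^'n \<Rightarrow> real) \<Rightarrow> real^'n \<Rightarrow> real" where
  "pd i f x = frechet_derivative f (at x) (axis i 1)"

definition flat :: "(real^'n \<Rightarrow> real^'n^'n) \<Rightarrow> (real^'n \<Rightarrow> real^'n) \<Rightarrow> real^'n \<Rightarrow> real^'n" where
  "flat g w x = (\<chi> i. \<Sum>j\<in>UNIV. g x $ i $ j * w x $ j)"

text \<open>Exterior derivative of a 1-form alpha, evaluated on tangent vectors X, Y at x
(determinant convention: (dx^i wedge dx^j)(X,Y) = X_i Y_j - X_j Y_i).\<close>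
definition dform :: "(real^'n \<Rightarrow> real^'n) \<Rightarrow> real^'n \<Rightarrow> real^'n \<Rightarrow> real^'n \<Rightarrow> real" where
  "dform \<alpha> X Y x = (\<Sum>i\<in>UNIV. \<Sum>j\<in>UNIV. pd i (\<lambda>y. \<alpha> y $ j) x * (X $ i * Y $ j - X $ j * Y $ i))"

definition divg :: "(real^'n \<Rightarrow> real^'n^'n) \<Rightarrow> (real^'n \<Rightarrow> real^'n) \<Rightarrow> real^'n \<Rightarrow> real" where
  "divg g w x = (1 / sqrt (det (g x))) * (\<Sum>i\<in>UNIV. pd i (\<lambda>y. sqrt (det (g y)) * w y $ i) x)"

definition frame_field :: "('k::finite \<Rightarrow> real^'n \<Rightarrow> real^'n) \<Rightarrow> ('k \<Rightarrow> real^'n \<Rightarrow> real) \<Rightarrow> real^'n \<Rightarrow> real^'n" where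
  "frame_field b c x = (\<Sum>k\<in>UNIV. c k x *\<^sub>R b k x)"

text \<open>curl(u) = sharp * d(flat u) on M0, computed with the oriented g0-orthonormal frame b
(theta^j the dual coframe, orientation theta^1 wedge theta^2 wedge theta^3):
 *(theta^2 wedge theta^3) = theta^1 etc., sharp theta^k = b^k.\<close>
definition curl :: "(real^3 \<Rightarrow> real^3^3) \<Rightarrow> (3 \<Rightarrow> real^3 \<Rightarrow> real^3) \<Rightarrow> (real^3 \<Rightarrow> real^3) \<Rightarrow> real^3 \<Rightarrow> real^3" where
  "curl g0 b u x = (\<Sum>k\<in>UNIV. dform (flat g0 u) (b (k+1) x) (b (k+2) x) x *\<^sub>R b k x)"

text \<open>rot(v) = * d(flat v) on M, with the oriented g-orthonormal frame (bz1, bz2):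
 *(theta_z^1 wedge theta_z^2) = 1.\<close>
definition rot :: "(real^2 \<Rightarrow> real^2^2) \<Rightarrow> (real^2 \<Rightarrow> real^2) \<Rightarrow> (real^2 \<Rightarrow> real^2) \<Rightarrow> (real^2 \<Rightarrow> real^2) \<Rightarrow> real^2 \<Rightarrow> real" where
  "rot g B1 B2 v y = dform (flat g v) (B1 y) (B2 y) y"

definition emb :: "real^2 \<Rightarrow> real^3" where
  "emb y = (\<chi> i. if i = 1 then y $ 1 else if i = 2 then y $ 2 else 0)"

definition idx :: "2 \<Rightarrow> 3" where
  "idx a = (if a = 1 then 1 else 2)"

definition induced :: "(real^3 \<Rightarrow> real^3^3) \<Rightarrow> real^2 \<Rightarrow> real^2^2" where
  "induced g0 y = (\<chi> a c. g0 (emb y) $ idx a $ idx c)"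

text \<open>Restriction to M of a vector field tangent to M, in M-coordinates.\<close>
definition restr :: "(real^3 \<Rightarrow> real^3) \<Rightarrow> real^2 \<Rightarrow> real^2" where
  "restr B y = (\<chi> a. B (emb y) $ idx a)"

end

theory Submission
  imports Defs
begin


lemma smooth_diff: "smooth_on f S \<Longrightarrow> x \<in> S \<Longrightarrow> f differentiable (at x)"
  by (erule smooth_on.cases) auto

lemma smooth_deriv: "smooth_on f S \<Longrightarrow> smooth_on (\<lambda>x. frechet_derivative f (at x) w) S"
  by (erule smooth_on.cases) auto

lemma smooth_pd: "smooth_on f S \<Longrightarrow> smooth_on (pd i f) S"
  unfolding pd_def[abs_def] by (rule smooth_deriv)

lemma smooth_const: "smooth_on (\<lambda>x. c) S"
proof (coinduction arbitrary: c rule: smooth_on.coinduct)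
  case smooth_on
  then show ?case by auto
qed

lemma fd_add: "f differentiable (at x) \<Longrightarrow> g differentiable (at x) \<Longrightarrow>
  frechet_derivative (\<lambda>x. f x + g x) (at x) h = frechet_derivative f (at x) h + frechet_derivative g (at x) h"
  by (metis (no_types) frechet_derivative_at frechet_derivative_works has_derivative_add)

lemma fd_mult: "f differentiable (at x) \<Longrightarrow> g differentiable (at x) \<Longrightarrow>
  frechet_derivative (\<lambda>x. f x * g x :: real) (at x) h = f x * frechet_derivative g (at x) h + frechet_derivative f (at x) h * g x"
proof -
  assume a: "f differentiable (at x)" "g differentiable (at x)"
  have "((\<lambda>x. f x * g x) has_derivative (\<lambda>h. f x * frechet_derivative g (at x) h + frechet_derivative f (at x) h * g x)) (at x)"
    using a by (intro has_derivative_mult) (auto simp: frechet_derivative_works)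
  then show ?thesis by (metis frechet_derivative_at)
qed

lemma diff_cong: "f differentiable (at x) \<Longrightarrow> open S \<Longrightarrow> x \<in> S \<Longrightarrow> (\<forall>y\<in>S. f y = g y) \<Longrightarrow> g differentiable (at x)"
  unfolding differentiable_def using has_derivative_transform_within_open by metis

inductive salg :: "(real^'n::finite) set \<Rightarrow> (real^'n \<Rightarrow> real) set \<Rightarrow> (real^'n \<Rightarrow> real) \<Rightarrow> bool"
  for S G where
  sm: "smooth_on f S \<Longrightarrow> salg S G f"
| gen: "g \<in> G \<Longrightarrow> salg S G g"
| add: "salg S G f \<Longrightarrow> salg S G g \<Longrightarrow> salg S G (\<lambda>x. f x + g x)"
| mul: "salg S G f \<Longrightarrow> salg S G g \<Longrightarrow> salg S G (\<lambda>x. f x * g x)"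
| cong: "salg S G f \<Longrightarrow> (\<forall>x\<in>S. f x = g x) \<Longrightarrow> salg S G g"

lemma salg_step:
  assumes S: "open S"
    and G1: "\<forall>g\<in>G. \<forall>x\<in>S. g differentiable (at x)"
    and G2: "\<forall>g\<in>G. \<forall>w. salg S G (\<lambda>x. frechet_derivative g (at x) w)"
    and f: "salg S G f"
  shows "(\<forall>x\<in>S. f differentiable (at x)) \<and> (\<forall>w. salg S G (\<lambda>x. frechet_derivative f (at x) w))"
  using f
proof induction
  case (sm f)
  then show ?case using smooth_diff smooth_deriv salg.sm by metis
next
  case (gen g)
  then show ?case using G1 G2 by auto
next
  case (add f g)
  show ?case
  proof (intro conjI allI ballI)
    show "(\<lambda>x. f x + g x) differentiable at x" if "x \<in> S" for x
      using add that by (auto intro: differentiable_add)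
    show "salg S G (\<lambda>x. frechet_derivative (\<lambda>x. f x + g x) (at x) w)" for w
      apply (rule salg.cong[OF salg.add[of S G "\<lambda>x. frechet_derivative f (at x) w" "\<lambda>x. frechet_derivative g (at x) w"]])
      using add by (auto simp: fd_add)
  qed
next
  case (mul f g)
  show ?case
  proof (intro conjI allI ballI)
    show "(\<lambda>x. f x * g x) differentiable at x" if "x \<in> S" for x
      using mul that by (auto intro: differentiable_mult)
    show "salg S G (\<lambda>x. frechet_derivative (\<lambda>x. f x * g x) (at x) w)" for w
      apply (rule salg.cong[OF salg.add[OF salg.mul[of S G f "\<lambda>x. frechet_derivative g (at x) w"]
               salg.mul[of S G "\<lambda>x. frechet_derivative f (at x) w" g]]])
      using mul by (auto simp: fd_mult)
  qed
next
  case (cong f g)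
  show ?case
  proof (intro conjI allI ballI)
    show "g differentiable at x" if "x \<in> S" for x
      using cong that S by (metis diff_cong)
    show "salg S G (\<lambda>x. frechet_derivative g (at x) w)" for w
      apply (rule salg.cong[of S G "\<lambda>x. frechet_derivative f (at x) w"])
      using cong S by (auto simp: frechet_derivative_transform_within_open)
  qed
qed

lemma salg_smooth:
  assumes S: "open S"
    and G1: "\<forall>g\<in>G. \<forall>x\<in>S. g differentiable (at x)"
    and G2: "\<forall>g\<in>G. \<forall>w. salg S G (\<lambda>x. frechet_derivative g (at x) w)"
    and f: "salg S G f"
  shows "smooth_on f S"
  using f
proof (coinduction arbitrary: f rule: smooth_on.coinduct)
  case (smooth_on f)
  then show ?case using salg_step[OF S G1 G2] by blast
qed

lemma smooth_add: "open S \<Longrightarrow> smooth_on f S \<Longrightarrow> smooth_on g S \<Longrightarrow> smooth_on (\<lambda>x. f x + g x) S"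
  by (rule salg_smooth[of S "{}"]) (auto intro: salg.intros)

lemma smooth_mult: "open S \<Longrightarrow> smooth_on f S \<Longrightarrow> smooth_on g S \<Longrightarrow> smooth_on (\<lambda>x. f x * g x) S"
  by (rule salg_smooth[of S "{}"]) (auto intro: salg.intros)

lemma smooth_cong: "open S \<Longrightarrow> smooth_on f S \<Longrightarrow> (\<forall>x\<in>S. f x = g x) \<Longrightarrow> smooth_on g S"
  by (rule salg_smooth[of S "{}"]) (auto intro: salg.intros)

lemma smooth_cmult: "open S \<Longrightarrow> smooth_on f S \<Longrightarrow> smooth_on (\<lambda>x. c * f x) S"
  by (rule smooth_mult[OF _ smooth_const]) 

lemma smooth_minus: "open S \<Longrightarrow> smooth_on f S \<Longrightarrow> smooth_on g S \<Longrightarrow> smooth_on (\<lambda>x. f x - g x) S"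
  by (rule smooth_cong[OF _ smooth_add[OF _ _ smooth_cmult[of S g "-1"]], of f]) auto

lemma smooth_neg: "open S \<Longrightarrow> smooth_on f S \<Longrightarrow> smooth_on (\<lambda>x. - f x) S"
  by (rule smooth_cong[OF _ smooth_cmult[of S f "-1"]]) auto

lemma smooth_sum: assumes "open S" "finite I" "\<And>i. i \<in> I \<Longrightarrow> smooth_on (f i) S" shows "smooth_on (\<lambda>x. \<Sum>i\<in>I. f i x) S"
  using assms(2,3) by (induction I rule: finite_induct) (auto intro: smooth_add smooth_const assms(1))

lemma smooth_inverse:
  assumes S: "open S" and f: "smooth_on f S" and nz: "\<forall>x\<in>S. f x \<noteq> 0"
  shows "smooth_on (\<lambda>x. inverse (f x)) S"
proof (rule salg_smooth[of S "{\<lambda>x. inverse (f x)}"])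
  show "open S" by fact
  show "salg S {\<lambda>x. inverse (f x)} (\<lambda>x. inverse (f x))" by (auto intro: salg.intros)
  have d: "((\<lambda>x. inverse (f x)) has_derivative (\<lambda>h. - (inverse (f x) * frechet_derivative f (at x) h * inverse (f x)))) (at x)" if "x \<in> S" for x
    using that nz smooth_diff[OF f] by (intro Deriv.has_derivative_inverse) (auto simp: frechet_derivative_works)
  show "\<forall>g\<in>{\<lambda>x. inverse (f x)}. \<forall>x\<in>S. g differentiable at x"
    using d by (auto simp: differentiable_def)
  show "\<forall>g\<in>{\<lambda>x. inverse (f x)}. \<forall>w. salg S {\<lambda>x. inverse (f x)} (\<lambda>x. frechet_derivative g (at x) w)"
  proof (intro ballI allI)
    fix g w assume "g \<in> {\<lambda>x. inverse (f x)}"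
    then have g: "g = (\<lambda>x. inverse (f x))" by simp
    have "salg S {\<lambda>x. inverse (f x)} (\<lambda>x. (-1) * (inverse (f x) * (frechet_derivative f (at x) w * inverse (f x))))"
      by (intro salg.mul salg.sm smooth_const smooth_deriv[OF f] salg.gen) auto
    then show "salg S {\<lambda>x. inverse (f x)} (\<lambda>x. frechet_derivative g (at x) w)"
      by (rule salg.cong) (auto simp: g d[THEN frechet_derivative_at, symmetric])
  qed
qed

lemma smooth_sqrt:
  assumes S: "open S" and f: "smooth_on f S" and pos: "\<forall>x\<in>S. f x > 0"
  shows "smooth_on (\<lambda>x. sqrt (f x)) S"
proof (rule salg_smooth[of S "{\<lambda>x. sqrt (f x), \<lambda>x. inverse (sqrt (f x))}"])
  let ?G = "{\<lambda>x. sqrt (f x), \<lambda>x. inverse (sqrt (f x))}"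
  show "open S" by fact
  show "salg S ?G (\<lambda>x. sqrt (f x))" by (auto intro: salg.intros)
  have d: "((\<lambda>x. sqrt (f x)) has_derivative (\<lambda>h. frechet_derivative f (at x) h * (inverse (sqrt (f x)) / 2))) (at x)" if "x \<in> S" for x
    using that pos smooth_diff[OF f] 
    by (intro DERIV_real_sqrt[THEN DERIV_compose_FDERIV]) (auto simp: frechet_derivative_works)
  have sd: "smooth_on (\<lambda>x. sqrt (f x)) S \<or> True" by simp
  have d2: "((\<lambda>x. inverse (sqrt (f x))) has_derivative (\<lambda>h. - (inverse (sqrt (f x)) * (frechet_derivative f (at x) h * (inverse (sqrt (f x)) / 2)) * inverse (sqrt (f x))))) (at x)" if "x \<in> S" for x
    using that pos d by (intro Deriv.has_derivative_inverse) auto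
  show "\<forall>g\<in>?G. \<forall>x\<in>S. g differentiable at x"
    using d d2 by (auto simp: differentiable_def)
  show "\<forall>g\<in>?G. \<forall>w. salg S ?G (\<lambda>x. frechet_derivative g (at x) w)"
  proof (intro ballI allI)
    fix g w assume "g \<in> ?G"
    then consider "g = (\<lambda>x. sqrt (f x))" | "g = (\<lambda>x. inverse (sqrt (f x)))" by blast
    then show "salg S ?G (\<lambda>x. frechet_derivative g (at x) w)"
    proof cases
      case 1
      have "salg S ?G (\<lambda>x. frechet_derivative f (at x) w * ((1/2) * inverse (sqrt (f x))))"
        by (intro salg.mul salg.sm smooth_const smooth_deriv[OF f] salg.gen) auto
      then show ?thesis
        by (rule salg.cong) (auto simp: 1 d[THEN frechet_derivative_at, symmetric])
    next
      case 2
      have "salg S ?G (\<lambda>x. (-1/2) * (inverse (sqrt (f x)) * (inverse (sqrt (f x)) * (inverse (sqrt (f x)) * frechet_derivative f (at x) w))))"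
        by (intro salg.mul salg.sm smooth_const smooth_deriv[OF f] salg.gen) auto
      then show ?thesis
        by (rule salg.cong) (auto simp: 2 d2[THEN frechet_derivative_at, symmetric])
    qed
  qed
qed

lemma smooth_linear: "bounded_linear L \<Longrightarrow> smooth_on L S"
proof (rule smooth_on.intros)
  assume L: "bounded_linear L"
  have e: "frechet_derivative L (at x) = L" for x
    using L bounded_linear_imp_has_derivative frechet_derivative_at by metis
  show "\<forall>x\<in>S. L differentiable at x" using L bounded_linear_imp_differentiable by blast
  show "\<forall>w. smooth_on (\<lambda>x. frechet_derivative L (at x) w) S" by (simp add: e smooth_const)
qed

lemma smooth_comp_linear:
  fixes L :: "real^'m::finite \<Rightarrow> real^'n::finite"
  assumes f: "smooth_on f S" and L: "bounded_linear L" and T: "open T" and LT: "\<forall>x\<in>T. L x \<in> S"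
  shows "smooth_on (\<lambda>x. f (L x)) T"
proof -
  define X where "X h T' \<longleftrightarrow> T' = T \<and> (\<exists>f. smooth_on f S \<and> (\<forall>x\<in>T. h x = f (L x)))" for h T'
  have "X (\<lambda>x. f (L x)) T" unfolding X_def using f by blast
  then show ?thesis
  proof (rule smooth_on.coinduct[of X])
    fix h T' assume "X h T'"
    then obtain f where TT: "T' = T" and f: "smooth_on f S" and h: "\<forall>x\<in>T. h x = f (L x)" unfolding X_def by blast
    have d: "((\<lambda>x. f (L x)) has_derivative (\<lambda>v. frechet_derivative f (at (L x)) (L v))) (at x)" if "x \<in> T" for x
      using has_derivative_compose[OF bounded_linear.has_derivative[OF L has_derivative_ident], of f] 
        smooth_diff[OF f] LT that by (auto simp: frechet_derivative_works comp_def)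
    have dh: "(h has_derivative (\<lambda>v. frechet_derivative f (at (L x)) (L v))) (at x)" if "x \<in> T" for x
      using has_derivative_transform_within_open[OF d[OF that] T that] h by metis
    show "\<exists>S f. h = f \<and> T' = S \<and> (\<forall>x\<in>S. f differentiable at x) \<and>
             (\<forall>w. X (\<lambda>x. frechet_derivative f (at x) w) S \<or> smooth_on (\<lambda>x. frechet_derivative f (at x) w) S)"
    proof (intro exI conjI ballI allI disjI1)
      show "h differentiable at x" if "x \<in> T'" for x using dh that TT by (auto simp: differentiable_def)
      fix w
      show "X (\<lambda>x. frechet_derivative h (at x) w) T'"
        unfolding X_def TT
        by (rule conjI[OF refl], rule exI[of _ "\<lambda>y. frechet_derivative f (at y) (L w)"])
           (auto simp: smooth_deriv[OF f] dh[THEN frechet_derivative_at, symmetric])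
    qed auto
  qed
qed


definition P :: "real^3 \<Rightarrow> real^2" where "P x = (\<chi> a. x $ idx a)"
definition Q :: "real^3 \<Rightarrow> real^3" where "Q x = emb (P x)"

lemma idx_simps[simp]: "idx 1 = 1" "idx 2 = 2" unfolding idx_def by auto
lemma num3: "(1::3) + 1 = 2" "(1::3) + 2 = 3" "(2::3) + 1 = 3" "(2::3) + 2 = 1" "(3::3) + 1 = 1" "(3::3) + 2 = 2"
  by simp_all
lemma neq3[simp]: "(1::3) \<noteq> 2" "(1::3) \<noteq> 3" "(2::3) \<noteq> 3" "(2::3) \<noteq> 1" "(3::3) \<noteq> 1" "(3::3) \<noteq> 2" "(1::2) \<noteq> 2" "(2::2) \<noteq> 1"
  by simp_all

lemma emb_comp: "emb y $ 1 = y $ 1" "emb y $ 2 = y $ 2" "emb y $ 3 = 0" "emb y $ idx a = y $ a"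
  unfolding emb_def idx_def using exhaust_2[of a] by auto

lemma P_comp[simp]: "P x $ a = x $ idx a" unfolding P_def by simp
lemma P_emb[simp]: "P (emb y) = y" by (simp add: vec_eq_iff emb_comp)
lemma Q_emb[simp]: "Q (emb y) = emb y" by (simp add: Q_def)
lemma PQ[simp]: "P (Q x) = P x" by (simp add: Q_def)
lemma QQ[simp]: "Q (Q x) = Q x" by (simp add: Q_def)
lemma Q3[simp]: "Q x $ 3 = 0" by (simp add: Q_def emb_comp)
lemma Q_comp: "Q x $ i = (if i = 3 then 0 else x $ i)"
  unfolding Q_def emb_def P_def idx_def using exhaust_3[of i] by auto
lemma Q_axis3: "Q (axis 3 1) = 0" by (simp add: vec_eq_iff Q_comp axis_def)
lemma emb_axis: "emb (axis a 1) = axis (idx a) 1"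
  unfolding emb_def idx_def axis_def using exhaust_2[of a] by (auto simp: vec_eq_iff)

lemma lin_P: "bounded_linear P"
  by (rule linear_conv_bounded_linear[THEN iffD1], rule linearI) (auto simp: vec_eq_iff)
lemma lin_emb: "bounded_linear emb"
  by (rule linear_conv_bounded_linear[THEN iffD1], rule linearI) (auto simp: vec_eq_iff emb_def)
lemma lin_Q: "bounded_linear Q"
  unfolding Q_def[abs_def] using bounded_linear_compose[OF lin_emb lin_P] by (simp add: o_def)

lemma fd_comp_lin: "bounded_linear L \<Longrightarrow> f differentiable (at (L x)) \<Longrightarrow>
   frechet_derivative (\<lambda>y. f (L y)) (at x) v = frechet_derivative f (at (L x)) (L v)"
proof -
  assume L: "bounded_linear L" and f: "f differentiable (at (L x))"
  have "((\<lambda>y. f (L y)) has_derivative (\<lambda>v. frechet_derivative f (at (L x)) (L v))) (at x)"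
    using has_derivative_compose[OF bounded_linear.has_derivative[OF L has_derivative_ident], of f] f
    by (auto simp: frechet_derivative_works comp_def)
  then show ?thesis by (metis frechet_derivative_at)
qed

lemma diff_comp_lin: "bounded_linear L \<Longrightarrow> f differentiable (at (L x)) \<Longrightarrow> (\<lambda>y. f (L y)) differentiable (at x)"
  using differentiable_chain_at[of L x f] bounded_linear_imp_differentiable by (auto simp: o_def)

lemma pd_cong: "f differentiable (at x) \<Longrightarrow> open S \<Longrightarrow> x \<in> S \<Longrightarrow> (\<forall>y\<in>S. f y = g y) \<Longrightarrow> pd i f x = pd i g x"
  unfolding pd_def using frechet_derivative_transform_within_open by metis

lemma pd_add: "f differentiable (at x) \<Longrightarrow> g differentiable (at x) \<Longrightarrow> pd i (\<lambda>y. f y + g y) x = pd i f x + pd i g x"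
  unfolding pd_def by (rule fd_add)

lemma pd_mult: "f differentiable (at x) \<Longrightarrow> g differentiable (at x) \<Longrightarrow> pd i (\<lambda>y. f y * g y) x = f x * pd i g x + pd i f x * g x"
  unfolding pd_def by (rule fd_mult)

lemma fd_coord: "frechet_derivative (\<lambda>y. y $ j) (at x) v = v $ j"
proof -
  have "((\<lambda>y. y $ j) has_derivative (\<lambda>y. y $ j)) (at x)"
    by (rule bounded_linear_imp_has_derivative) (rule bounded_linear_vec_nth)
  then show ?thesis by (metis frechet_derivative_at)
qed

lemma diff_coord: "(\<lambda>y. y $ j) differentiable (at x)"
  by (rule bounded_linear_imp_differentiable) (rule bounded_linear_vec_nth)

lemma pd_x3mult: "h differentiable (at x) \<Longrightarrow> x $ 3 = 0 \<Longrightarrow> pd i (\<lambda>y. y $ 3 * h y) x = (if i = 3 then h x else 0)"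
  by (simp add: pd_mult diff_coord) (simp add: pd_def fd_coord axis_def)


lemma frame_mat:
  fixes G :: "real^3^3" and bb :: "3 \<Rightarrow> real^3"
  defines "B \<equiv> (\<chi> i k. bb k $ i)"
  assumes ortho: "\<forall>k l. bb k \<bullet> (G *v bb l) = (if k = l then 1 else 0)"
  shows "transpose B ** G ** B = mat 1"
proof -
  have "(transpose B ** G ** B) $ k $ l = bb k \<bullet> (G *v bb l)" for k l
    unfolding B_def matrix_matrix_mult_def matrix_vector_mult_def inner_vec_def transpose_def
    by (simp add: sum_3 algebra_simps)
  then show ?thesis using ortho by (simp add: vec_eq_iff mat_def)
qed
lemma frame_facts:
  fixes G :: "real^3^3" and bb :: "3 \<Rightarrow> real^3"
  assumes ortho: "\<forall>k l. bb k \<bullet> (G *v bb l) = (if k = l then 1 else 0)"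
  shows "det G > 0" "w = (\<Sum>k\<in>UNIV. (bb k \<bullet> (G *v w)) *\<^sub>R bb k)"
    "bb 1 $ 3 = 0 \<Longrightarrow> bb 2 $ 3 = 0 \<Longrightarrow> bb 3 $ 3 \<noteq> 0"
proof -
  define B where "B = (\<chi> i k. bb k $ i)"
  have I: "transpose B ** G ** B = mat 1" unfolding B_def by (rule frame_mat[OF ortho])
  have d: "det B * det G * det B = 1"
    using arg_cong[OF I, of det] by (simp add: det_mul)
  then have "(det B * det B) * det G = 1" by (simp add: algebra_simps)
  moreover have "det B * det B \<ge> 0" by simp
  ultimately show "det G > 0"
    by (smt (verit) mult_nonneg_nonpos)
  have I2: "B ** (transpose B ** G) = mat 1"
    using I matrix_left_right_inverse by (metis matrix_mul_assoc)
  have "w = B *v ((transpose B ** G) *v w)"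
    by (simp add: matrix_vector_mul_assoc I2)
  also have "\<dots> = (\<Sum>k\<in>UNIV. (bb k \<bullet> (G *v w)) *\<^sub>R bb k)"
    unfolding B_def matrix_matrix_mult_def matrix_vector_mult_def inner_vec_def transpose_def vec_eq_iff
    apply (simp add: sum_3)
    by (simp add: algebra_simps)
  finally show "w = (\<Sum>k\<in>UNIV. (bb k \<bullet> (G *v w)) *\<^sub>R bb k)" .
  show "bb 3 $ 3 \<noteq> 0" if "bb 1 $ 3 = 0" "bb 2 $ 3 = 0"
  proof
    assume "bb 3 $ 3 = 0"
    then have "row 3 B = 0" using that unfolding row_def B_def vec_eq_iff by (simp add: forall_3)
    then have "det B = 0" by (rule det_zero_row)
    then show False using d by simp
  qed
qed

lemma det2_pos:
  fixes G :: "real^3^3"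
  assumes pos: "\<forall>\<xi>. \<xi> \<noteq> 0 \<longrightarrow> \<xi> \<bullet> (G *v \<xi>) > 0" and sym: "\<forall>i j. G $ i $ j = G $ j $ i"
  shows "G $ 1 $ 1 * G $ 2 $ 2 - G $ 1 $ 2 * G $ 2 $ 1 > 0"
proof -
  have A: "G $ 1 $ 1 > 0"
    using pos[rule_format, of "axis 1 1"] by (simp add: axis_def inner_vec_def matrix_vector_mult_def sum_3 vec_eq_iff)
  define \<xi> :: "real^3" where "\<xi> = (\<chi> i. if i = 1 then G $ 1 $ 2 else if i = 2 then - G $ 1 $ 1 else 0)"
  have "\<xi> \<noteq> 0" using A unfolding \<xi>_def by (auto simp: vec_eq_iff)
  then have "\<xi> \<bullet> (G *v \<xi>) > 0" using pos by blast
  moreover have "\<xi> \<bullet> (G *v \<xi>) = G $ 1 $ 1 * (G $ 1 $ 1 * G $ 2 $ 2 - G $ 1 $ 2 * G $ 2 $ 1)"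
    using sym[rule_format, of 1 2] unfolding \<xi>_def inner_vec_def matrix_vector_mult_def sum_3 
    apply simp
    by (simp add: algebra_simps)
  ultimately show ?thesis using A by (simp add: zero_less_mult_iff)
qed


lemma fd_germ: "open S \<Longrightarrow> x \<in> S \<Longrightarrow> (\<forall>y\<in>S. f y = g y) \<Longrightarrow> frechet_derivative f (at x) = frechet_derivative g (at x)"
proof -
  assume S: "open S" "x \<in> S" "\<forall>y\<in>S. f y = g y"
  have "(f has_derivative f') (at x) \<longleftrightarrow> (g has_derivative f') (at x)" for f'
    using S has_derivative_transform_within_open[of f f' x UNIV S g] has_derivative_transform_within_open[of g f' x UNIV S f]
    by auto
  then show ?thesis unfolding frechet_derivative_def by simp
qed

lemma pd_germ: "open S \<Longrightarrow> x \<in> S \<Longrightarrow> (\<forall>y\<in>S. f y = g y) \<Longrightarrow> pd i f x = pd i g x"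
  unfolding pd_def using fd_germ by metis

lemma curl_germ: "open S \<Longrightarrow> x \<in> S \<Longrightarrow> (\<forall>y\<in>S. F y = G y) \<Longrightarrow> curl g0 b F x = curl g0 b G x"
proof -
  assume S: "open S" "x \<in> S" "\<forall>y\<in>S. F y = G y"
  have "pd i (\<lambda>y. flat g0 F y $ j) x = pd i (\<lambda>y. flat g0 G y $ j) x" for i j
    by (rule pd_germ[OF S(1,2)]) (use S(3) in \<open>simp add: flat_def\<close>)
  then show ?thesis unfolding curl_def dform_def by simp
qed

lemma divg_germ: "open S \<Longrightarrow> x \<in> S \<Longrightarrow> (\<forall>y\<in>S. F y = G y) \<Longrightarrow> divg g0 F x = divg g0 G x"
proof -
  assume S: "open S" "x \<in> S" "\<forall>y\<in>S. F y = G y"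
  have "pd i (\<lambda>y. sqrt (det (g0 y)) * F y $ i) x = pd i (\<lambda>y. sqrt (det (g0 y)) * G y $ i) x" for i
    by (rule pd_germ[OF S(1,2)]) (use S(3) in \<open>simp\<close>)
  then show ?thesis unfolding divg_def by simp
qed

definition coef :: "(real^3 \<Rightarrow> real^3^3) \<Rightarrow> (3 \<Rightarrow> real^3 \<Rightarrow> real^3) \<Rightarrow> (real^3 \<Rightarrow> real^3) \<Rightarrow> 3 \<Rightarrow> real^3 \<Rightarrow> real"
  where "coef g0 b w k x = b k x \<bullet> (g0 x *v w x)"

locale tfive =
  fixes U :: "(real^3) set" and g0 :: "real^3 \<Rightarrow> real^3^3"
    and b :: "3 \<Rightarrow> real^3 \<Rightarrow> real^3" and v1 v2 :: "real^2 \<Rightarrow> real"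
  assumes U_open: "open U"
    and g0_smooth: "\<forall>i j. smooth_on (\<lambda>x. g0 x $ i $ j) U"
    and g0_sym: "\<forall>x\<in>U. \<forall>i j. g0 x $ i $ j = g0 x $ j $ i"
    and g0_pos: "\<forall>x\<in>U. \<forall>\<xi>. \<xi> \<noteq> 0 \<longrightarrow> \<xi> \<bullet> (g0 x *v \<xi>) > 0"
    and b_smooth: "\<forall>k i. smooth_on (\<lambda>x. b k x $ i) U"
    and b_orthonormal: "\<forall>x\<in>U. \<forall>k l. b k x \<bullet> (g0 x *v b l x) = (if k = l then 1 else 0)"
    and b_adapted: "\<forall>y\<in>{y. emb y \<in> U}. b 1 (emb y) $ 3 = 0 \<and> b 2 (emb y) $ 3 = 0"
    and v1_smooth: "smooth_on v1 {y. emb y \<in> U}" and v2_smooth: "smooth_on v2 {y. emb y \<in> U}"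
begin

definition "Ms = {y. emb y \<in> U}"
definition "W = {x \<in> U. Q x \<in> U}"

lemma Ms_open: "open Ms"
  unfolding Ms_def using continuous_open_preimage[OF linear_continuous_on[OF lin_emb] open_UNIV U_open] by (simp add: vimage_def)

lemma W_open: "open W"
proof -
  have "W = U \<inter> Q -` U" unfolding W_def by auto
  then show ?thesis using continuous_open_preimage[OF linear_continuous_on[OF lin_Q] open_UNIV U_open] U_open by auto
qed

lemma W_U: "x \<in> W \<Longrightarrow> x \<in> U" and W_Q: "x \<in> W \<Longrightarrow> Q x \<in> W" and W_QU: "x \<in> W \<Longrightarrow> Q x \<in> U"
  and W_P: "x \<in> W \<Longrightarrow> P x \<in> Ms" and emb_W: "y \<in> Ms \<Longrightarrow> emb y \<in> W" and Ms_U: "y \<in> Ms \<Longrightarrow> emb y \<in> U"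
  unfolding W_def Ms_def by (auto simp: Q_def)

lemma detg_pos: "x \<in> U \<Longrightarrow> det (g0 x) > 0"
  using frame_facts(1)[of "\<lambda>k. b k x" "g0 x"] b_orthonormal by blast

lemma frame_exp: "x \<in> U \<Longrightarrow> frame_field b (coef g0 b w) x = w x"
  using frame_facts(2)[of "\<lambda>k. b k x" "g0 x" "w x"] b_orthonormal unfolding frame_field_def coef_def by auto

lemma adapted: "y \<in> Ms \<Longrightarrow> b 1 (emb y) $ 3 = 0" "y \<in> Ms \<Longrightarrow> b 2 (emb y) $ 3 = 0"
  using b_adapted unfolding Ms_def by auto

lemma b33: "y \<in> Ms \<Longrightarrow> b 3 (emb y) $ 3 \<noteq> 0"
  using frame_facts(3)[of "\<lambda>k. b k (emb y)" "g0 (emb y)"] b_orthonormal adapted Ms_U by blast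

lemma ortho: "x \<in> U \<Longrightarrow> b k x \<bullet> (g0 x *v b l x) = (if k = l then 1 else 0)"
  using b_orthonormal by blast

lemma detind_pos: "y \<in> Ms \<Longrightarrow> det (induced g0 y) > 0"
  using det2_pos[of "g0 (emb y)"] g0_pos g0_sym Ms_U unfolding det_2 induced_def by auto


lemma sm_UW: "smooth_on f U \<Longrightarrow> smooth_on f W"
  using smooth_comp_linear[of f U "\<lambda>x. x" W] bounded_linear_ident W_open W_U by auto

lemma sm_QW: "smooth_on f U \<Longrightarrow> smooth_on (\<lambda>x. f (Q x)) W"
  using smooth_comp_linear[of f U Q W] lin_Q W_open W_QU by auto

lemma sm_QWW: "smooth_on f W \<Longrightarrow> smooth_on (\<lambda>x. f (Q x)) W"
  using smooth_comp_linear[of f W Q W] lin_Q W_open W_Q by auto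

lemma sm_PW: "smooth_on f Ms \<Longrightarrow> smooth_on (\<lambda>x. f (P x)) W"
  using smooth_comp_linear[of f Ms P W] lin_P W_open W_P by auto

lemma sm_embMs: "smooth_on f U \<Longrightarrow> smooth_on (\<lambda>y. f (emb y)) Ms"
  using smooth_comp_linear[of f U emb Ms] lin_emb Ms_open Ms_U by auto

lemma smooth_div1: "open S \<Longrightarrow> smooth_on f S \<Longrightarrow> \<forall>x\<in>S. f x \<noteq> 0 \<Longrightarrow> smooth_on (\<lambda>x. 1 / f x) S"
  using smooth_inverse[of S f] by (simp add: inverse_eq_divide)

lemma smooth_divide: "open S \<Longrightarrow> smooth_on g S \<Longrightarrow> smooth_on f S \<Longrightarrow> \<forall>x\<in>S. f x \<noteq> 0 \<Longrightarrow> smooth_on (\<lambda>x. g x / f x) S"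
  using smooth_mult[OF _ _ smooth_inverse[of S f], of g] by (simp add: divide_inverse)

lemmas sm_basic = smooth_add smooth_minus smooth_mult smooth_sum smooth_const smooth_neg W_open Ms_open U_open finite

lemma g0_sm: "smooth_on (\<lambda>x. g0 x $ i $ j) U" using g0_smooth by blast
lemma b_sm: "smooth_on (\<lambda>x. b k x $ i) U" using b_smooth by blast

definition "rho x = sqrt (det (g0 x))"
definition "sig y = sqrt (det (induced g0 y))"
definition "V y = v1 y *\<^sub>R restr (b 1) y + v2 y *\<^sub>R restr (b 2) y"
definition "w0 x = v1 (P x) *\<^sub>R b 1 (Q x) + v2 (P x) *\<^sub>R b 2 (Q x)"
definition "al0 = flat g0 w0"

lemma V_comp: "V y $ a = v1 y * b 1 (emb y) $ idx a + v2 y * b 2 (emb y) $ idx a"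
  unfolding V_def restr_def by simp
lemma w0_comp: "w0 x $ i = v1 (P x) * b 1 (Q x) $ i + v2 (P x) * b 2 (Q x) $ i"
  unfolding w0_def by simp
lemma al0_comp: "al0 x $ j = (\<Sum>k\<in>UNIV. g0 x $ j $ k * w0 x $ k)"
  unfolding al0_def flat_def by simp

lemma rho_pos: "x \<in> U \<Longrightarrow> rho x > 0" unfolding rho_def using detg_pos by simp
lemma sig_pos: "y \<in> Ms \<Longrightarrow> sig y > 0" unfolding sig_def using detind_pos by simp

lemma sm_rho: "smooth_on rho U"
proof -
  have "smooth_on (\<lambda>x. det (g0 x)) U"
    unfolding det_3 by (intro sm_basic g0_sm)
  then show ?thesis unfolding rho_def[abs_def] using smooth_sqrt U_open detg_pos by blast
qed

lemma sm_sig: "smooth_on sig Ms"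
proof -
  have "smooth_on (\<lambda>y. det (induced g0 y)) Ms"
    unfolding det_2 induced_def by (simp, intro sm_basic sm_embMs g0_sm)
  then show ?thesis unfolding sig_def[abs_def] using smooth_sqrt Ms_open detind_pos by blast
qed

lemma sm_V: "smooth_on (\<lambda>y. V y $ a) Ms"
  unfolding V_comp by (intro sm_basic sm_embMs b_sm v1_smooth[folded Ms_def] v2_smooth[folded Ms_def])

lemma sm_w0: "smooth_on (\<lambda>x. w0 x $ i) W"
  unfolding w0_comp by (intro sm_basic sm_QW b_sm sm_PW v1_smooth[folded Ms_def] v2_smooth[folded Ms_def])

lemma sm_al0: "smooth_on (\<lambda>x. al0 x $ j) W"
  unfolding al0_comp by (intro sm_basic sm_UW g0_sm sm_w0)


lemma sm_embW: "smooth_on f W \<Longrightarrow> smooth_on (\<lambda>y. f (emb y)) Ms"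
  using smooth_comp_linear[of f W emb Ms] lin_emb Ms_open emb_W by auto

definition "Dz y = divg (induced g0) V y - divg g0 w0 (emb y)"
definition "c1 y = - dform al0 (b 3 (emb y)) (b 1 (emb y)) (emb y) / b 3 (emb y) $ 3"
definition "c2 y = dform al0 (b 2 (emb y)) (b 3 (emb y)) (emb y) / b 3 (emb y) $ 3"
definition "c3 y = Dz y / b 3 (emb y) $ 3"
definition "z x = c1 (P x) *\<^sub>R b 1 (Q x) + c2 (P x) *\<^sub>R b 2 (Q x) + c3 (P x) *\<^sub>R b 3 (Q x)"
definition "w1 x = w0 x + (x $ 3) *\<^sub>R z x"

lemma sm_divgV: "smooth_on (divg (induced g0) V) Ms"
  unfolding divg_def[abs_def] sig_def[symmetric]
  by (intro sm_basic smooth_div1 smooth_pd sm_sig sm_V ballI sig_pos[THEN less_imp_neq, symmetric]) 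

lemma sm_pd_W: "smooth_on f W \<Longrightarrow> smooth_on (\<lambda>y. pd i f (emb y)) Ms"
  using sm_embW[OF smooth_pd] by blast

lemma sm_divgw0: "smooth_on (\<lambda>y. divg g0 w0 (emb y)) Ms"
  unfolding divg_def rho_def[symmetric]
  by (intro sm_basic smooth_div1 sm_pd_W sm_embW sm_UW sm_rho sm_w0 ballI rho_pos[THEN less_imp_neq, symmetric] Ms_U)

lemma sm_b_emb: "smooth_on (\<lambda>y. b k (emb y) $ i) Ms" by (intro sm_embMs b_sm)

lemma sm_dform: "smooth_on (\<lambda>y. dform al0 (b k (emb y)) (b l (emb y)) (emb y)) Ms"
  unfolding dform_def by (intro sm_basic sm_pd_W sm_al0 sm_b_emb)

lemma b33': "\<forall>y\<in>Ms. b 3 (emb y) $ 3 \<noteq> 0" using b33 by blast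

lemma sm_c: "smooth_on c1 Ms" "smooth_on c2 Ms" "smooth_on c3 Ms"
  unfolding c1_def[abs_def] c2_def[abs_def] c3_def[abs_def] Dz_def
  by (intro sm_basic smooth_divide sm_dform sm_b_emb b33' sm_divgV sm_divgw0)+

lemma z_comp: "z x $ i = c1 (P x) * b 1 (Q x) $ i + c2 (P x) * b 2 (Q x) $ i + c3 (P x) * b 3 (Q x) $ i"
  unfolding z_def by simp

lemma sm_z: "smooth_on (\<lambda>x. z x $ i) W"
  unfolding z_comp by (intro sm_basic sm_PW sm_c sm_QW b_sm)

lemma w1_comp: "w1 x $ i = w0 x $ i + x $ 3 * z x $ i"
  unfolding w1_def by simp

lemma sm_coord: "smooth_on (\<lambda>x. x $ i) S"
  by (rule smooth_linear) (rule bounded_linear_vec_nth)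

lemma sm_w1: "smooth_on (\<lambda>x. w1 x $ i) W"
  unfolding w1_comp by (intro sm_basic sm_w0 sm_z sm_coord)

lemma coef_comp: "coef g0 b w k x = (\<Sum>i\<in>UNIV. b k x $ i * (\<Sum>j\<in>UNIV. g0 x $ i $ j * w x $ j))"
  unfolding coef_def inner_vec_def matrix_vector_mult_def by simp

lemma sm_coef: "(\<And>i. smooth_on (\<lambda>x. w x $ i) W) \<Longrightarrow> smooth_on (coef g0 b w k) W"
  unfolding coef_comp[abs_def] by (intro sm_basic sm_UW[OF b_sm] sm_UW[OF g0_sm])

end


context tfive begin

lemma w0_M: "w0 (emb y) = v1 y *\<^sub>R b 1 (emb y) + v2 y *\<^sub>R b 2 (emb y)"
  unfolding w0_def by simp
lemma w1_M: "w1 (emb y) = w0 (emb y)"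
  unfolding w1_def by (simp add: emb_comp)
lemma z_M: "z (emb y) = c1 y *\<^sub>R b 1 (emb y) + c2 y *\<^sub>R b 2 (emb y) + c3 y *\<^sub>R b 3 (emb y)"
  unfolding z_def by simp

lemma coef_M:
  assumes y: "y \<in> Ms" and wM: "w (emb y) = w0 (emb y)"
  shows "coef g0 b w 1 (emb y) = v1 y" "coef g0 b w 2 (emb y) = v2 y" "coef g0 b w 3 (emb y) = 0"
  unfolding coef_def wM w0_M using ortho[OF Ms_U[OF y]]
  by (simp_all add: matrix_vector_right_distrib matrix_vector_mult_scaleR inner_add_right)

lemma gsym_inner: "x \<in> U \<Longrightarrow> (g0 x *v u) \<bullet> v = u \<bullet> (g0 x *v v)"
  using g0_sym[rule_format, of x]
  unfolding inner_vec_def matrix_vector_mult_def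
  by (simp add: sum_3 algebra_simps)

lemma sm_be: "smooth_on (\<lambda>x. (g0 x *v z x) $ j) W"
  unfolding matrix_vector_mult_def by (simp, intro sm_basic sm_UW[OF g0_sm] sm_z)

lemma flat_w1: "flat g0 w1 x $ j = al0 x $ j + x $ 3 * (g0 x *v z x) $ j"
  unfolding flat_def al0_comp w1_comp matrix_vector_mult_def
  by (simp add: algebra_simps sum.distrib sum_distrib_left)

lemma pd_flat_w1:
  assumes y: "y \<in> Ms"
  shows "pd i (\<lambda>x. flat g0 w1 x $ j) (emb y) = pd i (\<lambda>x. al0 x $ j) (emb y) + (if i = 3 then (g0 (emb y) *v z (emb y)) $ j else 0)"
proof -
  have X: "emb y \<in> W" using emb_W[OF y] .
  have d1: "(\<lambda>x. al0 x $ j) differentiable (at (emb y))" using smooth_diff[OF sm_al0 X] .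
  have d2: "(\<lambda>x. (g0 x *v z x) $ j) differentiable (at (emb y))" using smooth_diff[OF sm_be X] .
  have d3: "(\<lambda>x. x $ 3 * (g0 x *v z x) $ j) differentiable (at (emb y))"
    using d2 by (intro differentiable_mult diff_coord)
  show ?thesis
    unfolding flat_w1 pd_add[OF d1 d3] pd_x3mult[OF d2 emb_comp(3)] ..
qed

lemma dform_w1:
  assumes y: "y \<in> Ms"
  shows "dform (flat g0 w1) X Y (emb y) = dform al0 X Y (emb y)
     + (X $ 3 * ((g0 (emb y) *v z (emb y)) \<bullet> Y) - Y $ 3 * ((g0 (emb y) *v z (emb y)) \<bullet> X))"
  unfolding dform_def pd_flat_w1[OF y]
  by (simp add: sum_3 inner_vec_def algebra_simps)


lemma be_b:
  assumes y: "y \<in> Ms"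
  shows "(g0 (emb y) *v z (emb y)) \<bullet> b 1 (emb y) = c1 y"
    "(g0 (emb y) *v z (emb y)) \<bullet> b 2 (emb y) = c2 y"
    "(g0 (emb y) *v z (emb y)) \<bullet> b 3 (emb y) = c3 y"
  unfolding gsym_inner[OF Ms_U[OF y]] z_M using ortho[OF Ms_U[OF y]]
  by (simp_all add: inner_add_left)

lemma curl_w1:
  assumes y: "y \<in> Ms"
  shows "curl g0 b w1 (emb y) = dform al0 (b 1 (emb y)) (b 2 (emb y)) (emb y) *\<^sub>R b 3 (emb y)"
proof -
  have n: "b 3 (emb y) $ 3 \<noteq> 0" using b33[OF y] .
  have "curl g0 b w1 (emb y) = dform (flat g0 w1) (b 2 (emb y)) (b 3 (emb y)) (emb y) *\<^sub>R b 1 (emb y)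
     + dform (flat g0 w1) (b 3 (emb y)) (b 1 (emb y)) (emb y) *\<^sub>R b 2 (emb y)
     + dform (flat g0 w1) (b 1 (emb y)) (b 2 (emb y)) (emb y) *\<^sub>R b 3 (emb y)"
    unfolding curl_def sum_3 num3 ..
  also have "\<dots> = dform al0 (b 1 (emb y)) (b 2 (emb y)) (emb y) *\<^sub>R b 3 (emb y)"
    unfolding dform_w1[OF y] be_b[OF y] adapted[OF y] using n
    by (simp add: c1_def c2_def)
  finally show ?thesis .
qed

lemma flat_ind: "y \<in> Ms \<Longrightarrow> flat (induced g0) V y $ c = al0 (emb y) $ idx c"
  unfolding flat_def induced_def al0_comp w0_M V_comp
  using adapted[of y] exhaust_2[of c]
  by (auto simp: sum_2 sum_3)

lemma pd_flat_ind:
  assumes y: "y \<in> Ms"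
  shows "pd a (\<lambda>y. flat (induced g0) V y $ c) y = pd (idx a) (\<lambda>x. al0 x $ idx c) (emb y)"
proof -
  have "pd a (\<lambda>y. flat (induced g0) V y $ c) y = pd a (\<lambda>y. al0 (emb y) $ idx c) y"
    by (rule pd_germ[OF Ms_open y]) (simp add: flat_ind)
  also have "\<dots> = pd (idx a) (\<lambda>x. al0 x $ idx c) (emb y)"
    unfolding pd_def
    using fd_comp_lin[OF lin_emb, of "\<lambda>x. al0 x $ idx c" y "axis a 1"] smooth_diff[OF sm_al0 emb_W[OF y]]
    by (simp add: emb_axis)
  finally show ?thesis .
qed

lemma pullback:
  assumes y: "y \<in> Ms"
  shows "dform al0 (b 1 (emb y)) (b 2 (emb y)) (emb y) = rot (induced g0) (restr (b 1)) (restr (b 2)) V y"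
  unfolding rot_def dform_def pd_flat_ind[OF y] restr_def
  using adapted[OF y]
  by (simp add: sum_2 sum_3)

lemma divg_w1:
  assumes y: "y \<in> Ms"
  shows "divg g0 w1 (emb y) = divg (induced g0) V y"
proof -
  let ?X = "emb y"
  have X: "?X \<in> W" using emb_W[OF y] .
  have r: "rho ?X \<noteq> 0" using rho_pos[OF Ms_U[OF y]] by simp
  have smr: "smooth_on rho W" using sm_UW[OF sm_rho] .
  have e: "(\<lambda>x. rho x * w1 x $ i) = (\<lambda>x. rho x * w0 x $ i + x $ 3 * (rho x * z x $ i))" for i
    by (rule ext) (simp add: w1_comp algebra_simps)
  have d1: "(\<lambda>x. rho x * w0 x $ i) differentiable (at ?X)" for i
    using smooth_diff[OF smooth_mult[OF W_open smr sm_w0] X] .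
  have d2: "(\<lambda>x. rho x * z x $ i) differentiable (at ?X)" for i
    using smooth_diff[OF smooth_mult[OF W_open smr sm_z] X] .
  have d3: "(\<lambda>x. x $ 3 * (rho x * z x $ i)) differentiable (at ?X)" for i
    by (rule differentiable_mult[OF diff_coord d2])
  have p: "pd i (\<lambda>x. rho x * w1 x $ i) ?X = pd i (\<lambda>x. rho x * w0 x $ i) ?X + (if i = 3 then rho ?X * z ?X $ 3 else 0)" for i
    unfolding e pd_add[OF d1 d3] pd_x3mult[OF d2 emb_comp(3)] by simp
  have "divg g0 w1 ?X = 1 / rho ?X * (\<Sum>i\<in>UNIV. pd i (\<lambda>x. rho x * w0 x $ i) ?X) + z ?X $ 3"
    unfolding divg_def rho_def[symmetric] p using r
    by (simp add: sum.distrib field_simps)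
  also have "\<dots> = divg g0 w0 ?X + Dz y"
    unfolding divg_def rho_def[symmetric] z_M using adapted[OF y] b33[OF y] by (simp add: c3_def)
  also have "\<dots> = divg (induced g0) V y" unfolding Dz_def by simp
  finally show ?thesis .
qed

end


lemma pd_diff: "f differentiable (at x) \<Longrightarrow> g differentiable (at x) \<Longrightarrow> pd i (\<lambda>y. f y - g y) x = pd i f x - pd i g x"
proof -
  assume a: "f differentiable (at x)" "g differentiable (at x)"
  have "((\<lambda>y. f y - g y) has_derivative (\<lambda>h. frechet_derivative f (at x) h - frechet_derivative g (at x) h)) (at x)"
    using a by (intro has_derivative_diff) (auto simp: frechet_derivative_works)
  then show ?thesis unfolding pd_def by (metis frechet_derivative_at)
qed

lemma fd_zero: "f differentiable (at x) \<Longrightarrow> frechet_derivative f (at x) 0 = (0::real)"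
  using frechet_derivative_works has_derivative_bounded_linear linear_0 bounded_linear.linear by metis

context tfive begin

definition "r x = rho (Q x) *\<^sub>R w0 x"
definition "D2 x = (\<Sum>i\<in>UNIV. pd i (\<lambda>y. r y $ i) x)"
definition "m x = r x - (x $ 3 * D2 (Q x)) *\<^sub>R axis 3 1"
definition "w2 x = (1 / rho x) *\<^sub>R m x"

lemma w0_Q: "w0 (Q x) = w0 x" unfolding w0_def by simp
lemma r_Q: "r (Q x) = r x" unfolding r_def w0_Q by simp

lemma sm_r: "smooth_on (\<lambda>x. r x $ i) W"
  unfolding r_def by (simp, intro sm_basic sm_QW sm_rho sm_w0)

lemma sm_D2: "smooth_on D2 W"
  unfolding D2_def[abs_def] by (intro sm_basic smooth_pd sm_r)

lemma m_comp: "m x $ i = r x $ i - x $ 3 * D2 (Q x) * axis 3 1 $ i"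
  unfolding m_def by simp

lemma sm_m: "smooth_on (\<lambda>x. m x $ i) W"
  unfolding m_comp by (intro sm_basic sm_r sm_coord sm_QWW sm_D2)

lemma sm_w2: "smooth_on (\<lambda>x. w2 x $ i) W"
  unfolding w2_def vector_scaleR_component real_scaleR_def by (intro sm_basic smooth_div1 sm_m sm_UW[OF sm_rho] ballI rho_pos[THEN less_imp_neq, symmetric] W_U)

lemma w2_M: assumes y: "y \<in> Ms" shows "w2 (emb y) = w0 (emb y)"
proof -
  have "rho (emb y) > 0" using rho_pos[OF Ms_U[OF y]] .
  then show ?thesis unfolding w2_def m_def r_def by (simp add: emb_comp)
qed

lemma pd_r: assumes x: "x \<in> W" shows "pd i (\<lambda>y. r y $ i) x = pd i (\<lambda>y. r y $ i) (Q x)"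
proof -
  have d: "(\<lambda>y. r y $ i) differentiable (at (Q x))" using smooth_diff[OF sm_r W_Q[OF x]] .
  have "pd i (\<lambda>y. r y $ i) z = pd i (\<lambda>y. r (Q y) $ i) z" for z by (simp add: r_Q)
  moreover have "pd i (\<lambda>y. r (Q y) $ i) z = frechet_derivative (\<lambda>y. r y $ i) (at (Q x)) (Q (axis i 1))" if "Q z = Q x" for z
    unfolding pd_def using fd_comp_lin[OF lin_Q, of "\<lambda>y. r y $ i" z] d that by simp
  ultimately show ?thesis by simp
qed

lemma D2_Q: "x \<in> W \<Longrightarrow> D2 x = D2 (Q x)"
  unfolding D2_def using pd_r by simp

lemma divg_w2: assumes x: "x \<in> W" shows "divg g0 w2 x = 0"
proof -
  have xU: "x \<in> U" using W_U[OF x] .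
  have e: "pd i (\<lambda>y. sqrt (det (g0 y)) * w2 y $ i) x = pd i (\<lambda>y. m y $ i) x" for i
    by (rule pd_germ[OF U_open xU]) (use rho_pos in \<open>force simp: w2_def rho_def[symmetric]\<close>)
  have dr: "(\<lambda>y. r y $ i) differentiable (at x)" for i using smooth_diff[OF sm_r x] .
  have dD: "D2 differentiable (at (Q x))" using smooth_diff[OF sm_D2 W_Q[OF x]] .
  have dDQ: "(\<lambda>y. D2 (Q y)) differentiable (at x)" using diff_comp_lin[OF lin_Q dD] .
  have d3: "(\<lambda>y. y $ 3 * D2 (Q y)) differentiable (at x)" by (rule differentiable_mult[OF diff_coord dDQ])
  have p3: "pd 3 (\<lambda>y. y $ 3 * D2 (Q y)) x = D2 (Q x)"
    unfolding pd_mult[OF diff_coord dDQ]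
    unfolding pd_def fd_comp_lin[OF lin_Q dD] Q_axis3 fd_zero[OF dD] fd_coord by (simp add: axis_def)
  have pm: "pd i (\<lambda>y. m y $ i) x = pd i (\<lambda>y. r y $ i) x - (if i = 3 then D2 (Q x) else 0)" for i
  proof (cases "i = 3")
    case True
    have "pd i (\<lambda>y. m y $ i) x = pd i (\<lambda>y. r y $ i - y $ 3 * D2 (Q y)) x"
      unfolding m_comp True by (simp add: axis_def)
    then show ?thesis using True pd_diff[OF dr d3] p3 by simp
  next
    case False
    then show ?thesis unfolding m_comp by (simp add: axis_def)
  qed
  show ?thesis
    unfolding divg_def e pm sum_subtractf D2_def[symmetric] using D2_Q[OF x] by simp
qed

end

theorem theorem5:
  fixes U :: "(real^3) set" and g0 :: "real^3 \<Rightarrow> real^3^3"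
    and b :: "3 \<Rightarrow> real^3 \<Rightarrow> real^3" and v1 v2 :: "real^2 \<Rightarrow> real"
  defines "Mset \<equiv> {y :: real^2. emb y \<in> U}"
  defines "V \<equiv> (\<lambda>y. v1 y *\<^sub>R restr (b 1) y + v2 y *\<^sub>R restr (b 2) y)"
  assumes U_open: "open U" and meets: "Mset \<noteq> {}"
    and g0_smooth: "\<forall>i j. smooth_on (\<lambda>x. g0 x $ i $ j) U"
    and g0_sym: "\<forall>x\<in>U. \<forall>i j. g0 x $ i $ j = g0 x $ j $ i"
    and g0_pos: "\<forall>x\<in>U. \<forall>\<xi>. \<xi> \<noteq> 0 \<longrightarrow> \<xi> \<bullet> (g0 x *v \<xi>) > 0"
    and b_smooth: "\<forall>k i. smooth_on (\<lambda>x. b k x $ i) U"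
    and b_orthonormal: "\<forall>x\<in>U. \<forall>k l. b k x \<bullet> (g0 x *v b l x) = (if k = l then 1 else 0)"
    and b_adapted: "\<forall>y\<in>Mset. b 1 (emb y) $ 3 = 0 \<and> b 2 (emb y) $ 3 = 0"
    and v_smooth: "smooth_on v1 Mset" "smooth_on v2 Mset"
  shows
    "(\<exists>W u. open W \<and> emb ` Mset \<subseteq> W \<and> W \<subseteq> U \<and> (\<forall>k. smooth_on (u k) W) \<and>
        (\<forall>y\<in>Mset. u 3 (emb y) = 0 \<and> u 1 (emb y) = v1 y \<and> u 2 (emb y) = v2 y) \<and>
        (\<forall>y\<in>Mset.
           curl g0 b (frame_field b u) (emb y)
             = rot (induced g0) (restr (b 1)) (restr (b 2)) V y *\<^sub>R b 3 (emb y) \<and>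
           divg g0 (frame_field b u) (emb y) = divg (induced g0) V y))
     \<and> ((\<forall>y\<in>Mset. divg (induced g0) V y = 0) \<longrightarrow>
        (\<exists>W u. open W \<and> emb ` Mset \<subseteq> W \<and> W \<subseteq> U \<and> (\<forall>k. smooth_on (u k) W) \<and>
           (\<forall>y\<in>Mset. u 3 (emb y) = 0 \<and> u 1 (emb y) = v1 y \<and> u 2 (emb y) = v2 y) \<and>
           (\<forall>x\<in>W. divg g0 (frame_field b u) x = 0)))"
proof -
  interpret T: tfive U g0 b v1 v2
    using U_open g0_smooth g0_sym g0_pos b_smooth b_orthonormal b_adapted v_smooth
    unfolding Mset_def by unfold_locales auto
  have MM: "Mset = T.Ms" unfolding Mset_def T.Ms_def ..
  have VV: "V = T.V" unfolding V_def T.V_def[abs_def] ..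
  have WU: "T.W \<subseteq> U" using T.W_U by blast
  have eW: "emb ` Mset \<subseteq> T.W" unfolding MM using T.emb_W by blast
  have P1: "\<exists>W u. open W \<and> emb ` Mset \<subseteq> W \<and> W \<subseteq> U \<and> (\<forall>k. smooth_on (u k) W) \<and>
        (\<forall>y\<in>Mset. u 3 (emb y) = 0 \<and> u 1 (emb y) = v1 y \<and> u 2 (emb y) = v2 y) \<and>
        (\<forall>y\<in>Mset.
           curl g0 b (frame_field b u) (emb y)
             = rot (induced g0) (restr (b 1)) (restr (b 2)) V y *\<^sub>R b 3 (emb y) \<and>
           divg g0 (frame_field b u) (emb y) = divg (induced g0) V y)"
  proof (intro exI conjI ballI allI)
    show "open T.W" by (rule T.W_open)
    show "emb ` Mset \<subseteq> T.W" by (rule eW)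
    show "T.W \<subseteq> U" by (rule WU)
    show "smooth_on (coef g0 b T.w1 k) T.W" for k by (rule T.sm_coef[OF T.sm_w1])
    fix y assume y: "y \<in> Mset"
    then have y': "y \<in> T.Ms" unfolding MM .
    show "coef g0 b T.w1 3 (emb y) = 0" "coef g0 b T.w1 1 (emb y) = v1 y" "coef g0 b T.w1 2 (emb y) = v2 y"
      using T.coef_M[of y T.w1, OF y' T.w1_M] by auto
    have fe: "\<forall>x\<in>U. frame_field b (coef g0 b T.w1) x = T.w1 x" using T.frame_exp by blast
    show "curl g0 b (frame_field b (coef g0 b T.w1)) (emb y) = rot (induced g0) (restr (b 1)) (restr (b 2)) V y *\<^sub>R b 3 (emb y)"
      unfolding curl_germ[OF T.U_open T.Ms_U[OF y'] fe] T.curl_w1[OF y'] T.pullback[OF y'] VV ..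
    show "divg g0 (frame_field b (coef g0 b T.w1)) (emb y) = divg (induced g0) V y"
      unfolding divg_germ[OF T.U_open T.Ms_U[OF y'] fe] T.divg_w1[OF y'] VV ..
  qed
  have P2: "\<exists>W u. open W \<and> emb ` Mset \<subseteq> W \<and> W \<subseteq> U \<and> (\<forall>k. smooth_on (u k) W) \<and>
           (\<forall>y\<in>Mset. u 3 (emb y) = 0 \<and> u 1 (emb y) = v1 y \<and> u 2 (emb y) = v2 y) \<and>
           (\<forall>x\<in>W. divg g0 (frame_field b u) x = 0)"
  proof (intro exI conjI ballI allI)
    show "open T.W" by (rule T.W_open)
    show "emb ` Mset \<subseteq> T.W" by (rule eW)
    show "T.W \<subseteq> U" by (rule WU)
    show "smooth_on (coef g0 b T.w2 k) T.W" for k by (rule T.sm_coef[OF T.sm_w2])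
    fix y assume y: "y \<in> Mset"
    then have y': "y \<in> T.Ms" unfolding MM .
    show "coef g0 b T.w2 3 (emb y) = 0" "coef g0 b T.w2 1 (emb y) = v1 y" "coef g0 b T.w2 2 (emb y) = v2 y"
      using T.coef_M[of y T.w2, OF y' T.w2_M[OF y']] by auto
  next
    fix x assume x: "x \<in> T.W"
    have fe: "\<forall>x\<in>U. frame_field b (coef g0 b T.w2) x = T.w2 x" using T.frame_exp by blast
    show "divg g0 (frame_field b (coef g0 b T.w2)) x = 0"
      unfolding divg_germ[OF T.U_open T.W_U[OF x] fe] T.divg_w2[OF x] ..
  qed
  show ?thesis using P1 P2 by blast
qed

end
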